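(* Let $V$ be a finite set of voters, $A$ a finite set of alternatives, and $F:\mathcal{P}(V,A)\to 2^A\setminus\{\emptyset\}$ a social choice correspondence. The following two conditions are equivalent: (1) $F$ is onto with respect to singletons, is strategy-proof for optimists (SPO), and is strategy-proof for pessimists (SPP). (2) $F$ is onto with respect to singletons, and there exist, for each voter $i\in V$, functions $p_i:\mathcal{P}(V,A)\times A\times 2^A\to[0,1]$ such that (a) for every profile $P$ and every nonempty $X\subseteq A$, $\sum_{x\in X}p_i(P,x,X)=1$; (b) for every profile $P$, every nonempty $X\subseteq A$ and every $a\in X$, $p_i(P,a,X)>0$ whenever $a=\mathrm{best}(P_i,X)$ or $a=\mathrm{worst}(P_i,X)$, where $P_i$ is voter $i$'s ballot in $P$; (c) for every voter $i$, every profile $P=P_iP_{-i}$, every linear order $P_i'$ over $A$, and every utility function $u_i:A\to\mathbb{R}$ consistent with $P_i$ (i.e. $u_i(a)>u_i(b)$ whenever $a\succ_i b$ in $P_i$), $$\sum_{x\in F(P_iP_{-i})}p_i\big(P_iP_{-i},x,F(P_iP_{-i})\big)\,u_i(x)\;\geq\;\sum_{x\in F(P_i'P_{-i})}p_i\big(P_iP_{-i},x,F(P_i'P_{-i})\big)\,u_i(x).$$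
   Context: $V$ is a finite set of voters and $A$ a finite set of alternatives. A profile $P$ assigns to every voter $i\in V$ a linear order $P_i$ over $A$ (a ballot); $\succ_i$ denotes the strict order of $P_i$ and $\succeq_i$ its reflexive version. $\mathcal{P}(V,A)$ is the set of all profiles. $P_{-i}$ denotes the ballots of all voters other than $i$, so $P=P_iP_{-i}$, and $P_i'P_{-i}$ is the profile obtained from $P$ by replacing $P_i$ with the linear order $P_i'$. A social choice correspondence is a map $F:\mathcal{P}(V,A)\to 2^A\setminus\{\emptyset\}$. $F$ is onto with respect to singletons if for every $a\in A$ there is a profile $P$ with $F(P)=\{a\}$. For nonempty $W\subseteq A$, $\mathrm{best}(P_i,W)$ and $\mathrm{worst}(P_i,W)$ denote the $P_i$-best and $P_i$-worst elements of $W$. Define weak orders on nonempty subsets of $A$: $X\succeq_i^O Y$ iff $\mathrm{best}(P_i,X)\succeq_i\mathrm{best}(P_i,Y)$; $X\succeq_i^P Y$ iff $\mathrm{worst}(P_i,X)\succeq_i\mathrm{worst}(P_i,Y)$. $F$ is strategy-proof for optimists (SPO) if for every voter $i$, every profile $P_iP_{-i}$ and every linear order $P_i'$, $F(P_iP_{-i})\succeq_i^O F(P_i'P_{-i})$ (with $\succeq_i$ taken from the sincere ballot $P_i$). $F$ is strategy-proof for pessimists (SPP) if for every voter $i$, every profile $P_iP_{-i}$ and every linear order $P_i'$, $F(P_iP_{-i})\succeq_i^P F(P_i'P_{-i})$. *)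

theory Defs
  imports Complex_Main
begin

text \<open>A ballot is a linear order on the alternatives A, represented as a relation R,
  where (a, b) \<in> R means "a is weakly preferred to b" (reflexive version).
  A profile assigns a ballot to every voter in V; outside V it is fixed to the empty
  relation, so that profiles are exactly the elements of P(V,A).\<close>

definition profiles :: "'v set \<Rightarrow> 'a set \<Rightarrow> ('v \<Rightarrow> 'a rel) set" where
  "profiles V A = {P. (\<forall>i\<in>V. linear_order_on A (P i)) \<and> (\<forall>i. i \<notin> V \<longrightarrow> P i = {})}"

definition strict_pref :: "'a rel \<Rightarrow> 'a \<Rightarrow> 'a \<Rightarrow> bool" where
  "strict_pref R a b \<longleftrightarrow> (a, b) \<in> R \<and> a \<noteq> b"

definition best :: "'a rel \<Rightarrow> 'a set \<Rightarrow> 'a" where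
  "best R X = (THE x. x \<in> X \<and> (\<forall>y\<in>X. (x, y) \<in> R))"

definition worst :: "'a rel \<Rightarrow> 'a set \<Rightarrow> 'a" where
  "worst R X = (THE x. x \<in> X \<and> (\<forall>y\<in>X. (y, x) \<in> R))"

definition is_scc :: "'v set \<Rightarrow> 'a set \<Rightarrow> (('v \<Rightarrow> 'a rel) \<Rightarrow> 'a set) \<Rightarrow> bool" where
  "is_scc V A F \<longleftrightarrow> (\<forall>P\<in>profiles V A. F P \<noteq> {} \<and> F P \<subseteq> A)"

definition onto_singletons :: "'v set \<Rightarrow> 'a set \<Rightarrow> (('v \<Rightarrow> 'a rel) \<Rightarrow> 'a set) \<Rightarrow> bool" where
  "onto_singletons V A F \<longleftrightarrow> (\<forall>a\<in>A. \<exists>P\<in>profiles V A. F P = {a})"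

definition SPO :: "'v set \<Rightarrow> 'a set \<Rightarrow> (('v \<Rightarrow> 'a rel) \<Rightarrow> 'a set) \<Rightarrow> bool" where
  "SPO V A F \<longleftrightarrow> (\<forall>i\<in>V. \<forall>P\<in>profiles V A. \<forall>R. linear_order_on A R \<longrightarrow>
      (best (P i) (F P), best (P i) (F (P(i := R)))) \<in> P i)"

definition SPP :: "'v set \<Rightarrow> 'a set \<Rightarrow> (('v \<Rightarrow> 'a rel) \<Rightarrow> 'a set) \<Rightarrow> bool" where
  "SPP V A F \<longleftrightarrow> (\<forall>i\<in>V. \<forall>P\<in>profiles V A. \<forall>R. linear_order_on A R \<longrightarrow>
      (worst (P i) (F P), worst (P i) (F (P(i := R)))) \<in> P i)"

definition consistent_utility :: "'a set \<Rightarrow> 'a rel \<Rightarrow> ('a \<Rightarrow> real) \<Rightarrow> bool" where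
  "consistent_utility A R u \<longleftrightarrow> (\<forall>a\<in>A. \<forall>b\<in>A. strict_pref R a b \<longrightarrow> u a > u b)"

end

theory Submission imports Defs begin

lemma lin_props:
  assumes "linear_order_on A R"
  shows "R \<subseteq> A\<times>A" "\<And>x. x\<in>A \<Longrightarrow> (x,x)\<in>R" "trans R" "antisym R"
    "\<And>x y. x\<in>A \<Longrightarrow> y\<in>A \<Longrightarrow> x\<noteq>y \<Longrightarrow> (x,y)\<in>R \<or> (y,x)\<in>R"
  using assms by (auto simp: linear_order_on_def partial_order_on_def preorder_on_def refl_on_def total_on_def)

lemma best_ex:
  assumes lo: "linear_order_on A R" and "finite X" "X \<noteq> {}" "X \<subseteq> A"
  shows "\<exists>x. x \<in> X \<and> (\<forall>y\<in>X. (x, y) \<in> R)"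
  using assms(2,3,4)
proof (induction X rule: finite_ne_induct)
  case (singleton x) then show ?case using lin_props(2)[OF lo] by auto
next
  case (insert x F)
  then obtain m where m: "m \<in> F" "\<forall>y\<in>F. (m,y)\<in>R" by auto
  show ?case
  proof (cases "(x,m) \<in> R")
    case True then show ?thesis using m lin_props(2,3)[OF lo] insert.prems
      by (auto dest: transD)
  next
    case False
    then have "(m,x)\<in>R" using lin_props(5)[OF lo, of x m] insert m by auto
    then show ?thesis using m by auto
  qed
qed

lemma best_prop:
  assumes lo: "linear_order_on A R" and "finite X" "X \<noteq> {}" "X \<subseteq> A"
  shows "best R X \<in> X \<and> (\<forall>y\<in>X. (best R X, y) \<in> R)"
proof -
  obtain x where x: "x \<in> X" "\<forall>y\<in>X. (x, y) \<in> R" using best_ex[OF assms] by blast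
  have u: "z = x" if z: "z \<in> X \<and> (\<forall>y\<in>X. (z, y) \<in> R)" for z
  proof -
    have "(z,x) \<in> R" "(x,z) \<in> R" using x z by auto
    then show "z = x" using antisymD[OF lin_props(4)[OF lo]] by blast
  qed
  have "best R X = x" unfolding best_def
    by (rule the_equality[OF _ u]) (use x in auto)
  then show ?thesis using x by simp
qed

lemma worst_best: "worst R X = best (R\<inverse>) X"
  unfolding worst_def best_def by simp

lemma worst_prop:
  assumes lo: "linear_order_on A R" and "finite X" "X \<noteq> {}" "X \<subseteq> A"
  shows "worst R X \<in> X \<and> (\<forall>y\<in>X. (y, worst R X) \<in> R)"
  using best_prop[of A "R\<inverse>" X] assms by (simp add: worst_best)

definition rk :: "'a set \<Rightarrow> 'a rel \<Rightarrow> 'a \<Rightarrow> real" where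
  "rk A R x = real (card {y\<in>A. (x,y)\<in>R})"

lemma rk_bounds: "finite A \<Longrightarrow> 0 \<le> rk A R x \<and> rk A R x \<le> real (card A)"
  unfolding rk_def by (auto intro: card_mono)

lemma rk_strict:
  assumes lo: "linear_order_on A R" and "finite A" "a\<in>A" "b\<in>A" "strict_pref R a b"
  shows "rk A R a > rk A R b"
proof -
  have "{y\<in>A. (b,y)\<in>R} \<subset> {y\<in>A. (a,y)\<in>R}"
  proof
    show "{y\<in>A. (b,y)\<in>R} \<subseteq> {y\<in>A. (a,y)\<in>R}"
      using assms lin_props(3)[OF lo] unfolding strict_pref_def by (auto dest: transD)
    have "a \<in> {y\<in>A. (a,y)\<in>R}" using assms lin_props(2)[OF lo] by auto
    moreover have "a \<notin> {y\<in>A. (b,y)\<in>R}" using assms lin_props(4)[OF lo]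
      unfolding strict_pref_def by (auto dest: antisymD)
    ultimately show "{y\<in>A. (b,y)\<in>R} \<noteq> {y\<in>A. (a,y)\<in>R}" by blast
  qed
  then show ?thesis unfolding rk_def using assms(2) by (simp add: psubset_card_mono)
qed


lemma cu_mono:
  assumes "consistent_utility A R u" "a\<in>A" "b\<in>A" "(a,b)\<in>R"
  shows "u a \<ge> u b"
  using assms unfolding consistent_utility_def strict_pref_def
  by (cases "a = b") (auto intro: less_imp_le)

lemma sum_bw:
  fixes u :: "'a \<Rightarrow> real"
  assumes "finite X" "b\<in>X" "w\<in>X"
  shows "(\<Sum>x\<in>X. ((if x=b then 1/2 else 0) + (if x=w then 1/2 else 0)) * u x) = (u b + u w)/2"
proof -
  have "(\<Sum>x\<in>X. ((if x=b then 1/2 else 0) + (if x=w then 1/2 else 0)) * u x)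
     = (\<Sum>x\<in>X. (if x=b then u x / 2 else 0) + (if x=w then u x/2 else 0))"
    by (rule sum.cong) auto
  also have "\<dots> = (\<Sum>x\<in>X. (if x=b then u x / 2 else 0)) + (\<Sum>x\<in>X. (if x=w then u x/2 else 0))"
    by (rule sum.distrib)
  also have "\<dots> = u b / 2 + u w / 2" using assms by (simp add: sum.delta')
  finally show ?thesis by simp
qed

theorem mainTheorem1:
  fixes V :: "'v set" and A :: "'a set" and F :: "('v \<Rightarrow> 'a rel) \<Rightarrow> 'a set"
  assumes "finite V" and "finite A" and "is_scc V A F"
  shows "(onto_singletons V A F \<and> SPO V A F \<and> SPP V A F) \<longleftrightarrow>
    (onto_singletons V A F \<and>
     (\<exists>p :: 'v \<Rightarrow> ('v \<Rightarrow> 'a rel) \<Rightarrow> 'a \<Rightarrow> 'a set \<Rightarrow> real.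
        (\<forall>i\<in>V. \<forall>P\<in>profiles V A. \<forall>x\<in>A. \<forall>X. X \<subseteq> A \<longrightarrow> 0 \<le> p i P x X \<and> p i P x X \<le> 1) \<and>
        (\<forall>i\<in>V. \<forall>P\<in>profiles V A. \<forall>X. X \<subseteq> A \<and> X \<noteq> {} \<longrightarrow> (\<Sum>x\<in>X. p i P x X) = 1) \<and>
        (\<forall>i\<in>V. \<forall>P\<in>profiles V A. \<forall>X. X \<subseteq> A \<and> X \<noteq> {} \<longrightarrow>
            (\<forall>a\<in>X. (a = best (P i) X \<or> a = worst (P i) X) \<longrightarrow> p i P a X > 0)) \<and>
        (\<forall>i\<in>V. \<forall>P\<in>profiles V A. \<forall>R u. linear_order_on A R \<and> consistent_utility A (P i) u \<longrightarrow>
            (\<Sum>x\<in>F P. p i P x (F P) * u x) \<ge> (\<Sum>x\<in>F (P(i := R)). p i P x (F (P(i := R))) * u x))))"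
proof -
  have lo: "\<And>P i. P\<in>profiles V A \<Longrightarrow> i\<in>V \<Longrightarrow> linear_order_on A (P i)"
    unfolding profiles_def by auto
  have upd: "\<And>P i R. P\<in>profiles V A \<Longrightarrow> i\<in>V \<Longrightarrow> linear_order_on A R \<Longrightarrow> P(i:=R) \<in> profiles V A"
    unfolding profiles_def by auto
  have FP: "\<And>P. P\<in>profiles V A \<Longrightarrow> F P \<noteq> {} \<and> F P \<subseteq> A \<and> finite (F P)"
    using assms(3) assms(2) unfolding is_scc_def by (auto intro: finite_subset)
  show ?thesis
  proof
    assume H: "onto_singletons V A F \<and> SPO V A F \<and> SPP V A F"
    define pp :: "'v \<Rightarrow> ('v \<Rightarrow> 'a rel) \<Rightarrow> 'a \<Rightarrow> 'a set \<Rightarrow> real" where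
      "pp i P x X = (if x = best (P i) X then 1/2 else 0) + (if x = worst (P i) X then 1/2 else 0)" for i P x X
    have c1: "\<forall>i\<in>V. \<forall>P\<in>profiles V A. \<forall>x\<in>A. \<forall>X. X \<subseteq> A \<longrightarrow> 0 \<le> pp i P x X \<and> pp i P x X \<le> 1"
      unfolding pp_def by auto
    have c2: "\<forall>i\<in>V. \<forall>P\<in>profiles V A. \<forall>X. X \<subseteq> A \<and> X \<noteq> {} \<longrightarrow> (\<Sum>x\<in>X. pp i P x X) = 1"
    proof (intro ballI allI impI)
      fix i P X assume iP: "i\<in>V" "P\<in>profiles V A" and X: "X \<subseteq> A \<and> X \<noteq> {}"
      have fX: "finite X" using X assms(2) finite_subset by blast
      have loi: "linear_order_on A (P i)" using lo iP by blast
      have b: "best (P i) X \<in> X" "worst (P i) X \<in> X"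
        using best_prop[OF loi fX] worst_prop[OF loi fX] X by blast+
      show "(\<Sum>x\<in>X. pp i P x X) = 1"
        using sum_bw[OF \<open>finite X\<close> b, of "\<lambda>_. 1"] unfolding pp_def by simp
    qed
    have c3: "\<forall>i\<in>V. \<forall>P\<in>profiles V A. \<forall>X. X \<subseteq> A \<and> X \<noteq> {} \<longrightarrow>
            (\<forall>a\<in>X. (a = best (P i) X \<or> a = worst (P i) X) \<longrightarrow> pp i P a X > 0)"
      unfolding pp_def by auto
    have c4: "\<forall>i\<in>V. \<forall>P\<in>profiles V A. \<forall>R u. linear_order_on A R \<and> consistent_utility A (P i) u \<longrightarrow>
            (\<Sum>x\<in>F P. pp i P x (F P) * u x) \<ge> (\<Sum>x\<in>F (P(i := R)). pp i P x (F (P(i := R))) * u x)"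
    proof (intro ballI allI impI)
      fix i P R u assume i: "i\<in>V" and P: "P\<in>profiles V A" and Ru: "linear_order_on A R \<and> consistent_utility A (P i) u"
      define P' where "P' = P(i:=R)"
      have P': "P' \<in> profiles V A" using upd i P Ru unfolding P'_def by blast
      have loi: "linear_order_on A (P i)" using lo i P by blast
      have bw: "best (P i) (F P) \<in> F P" "worst (P i) (F P) \<in> F P"
        using best_prop[OF loi] worst_prop[OF loi] FP[OF P] by blast+
      have bw': "best (P i) (F P') \<in> F P'" "worst (P i) (F P') \<in> F P'"
        using best_prop[OF loi] worst_prop[OF loi] FP[OF P'] by blast+
      have s1: "(best (P i) (F P), best (P i) (F P')) \<in> P i"
        using H[THEN conjunct2, THEN conjunct1, unfolded SPO_def, rule_format, OF i P, of R] Ru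
        unfolding P'_def by blast
      have s2: "(worst (P i) (F P), worst (P i) (F P')) \<in> P i"
        using H[THEN conjunct2, THEN conjunct2, unfolded SPP_def, rule_format, OF i P, of R] Ru
        unfolding P'_def by blast
      have inA: "best (P i) (F P) \<in> A" "worst (P i) (F P) \<in> A" "best (P i) (F P') \<in> A" "worst (P i) (F P') \<in> A"
        using bw bw' FP[OF P] FP[OF P'] by blast+
      have cu: "consistent_utility A (P i) u" using Ru by blast
      have m1: "u (best (P i) (F P)) \<ge> u (best (P i) (F P'))"
        by (rule cu_mono[OF cu inA(1) inA(3) s1])
      have m2: "u (worst (P i) (F P)) \<ge> u (worst (P i) (F P'))"
        by (rule cu_mono[OF cu inA(2) inA(4) s2])
      have m3: "(u (best (P i) (F P')) + u (worst (P i) (F P'))) / 2 \<le> (u (best (P i) (F P)) + u (worst (P i) (F P))) / 2"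
        using add_mono[OF m1 m2] by (simp add: divide_right_mono)
      have e1: "(\<Sum>x\<in>F P. pp i P x (F P) * u x) = (u (best (P i) (F P)) + u (worst (P i) (F P))) / 2"
        unfolding pp_def by (rule sum_bw[OF conjunct2[OF conjunct2[OF FP[OF P]]] bw])
      have e2: "(\<Sum>x\<in>F P'. pp i P x (F P') * u x) = (u (best (P i) (F P')) + u (worst (P i) (F P'))) / 2"
        unfolding pp_def by (rule sum_bw[OF conjunct2[OF conjunct2[OF FP[OF P']]] bw'])
      show "(\<Sum>x\<in>F P. pp i P x (F P) * u x) \<ge> (\<Sum>x\<in>F (P(i := R)). pp i P x (F (P(i := R))) * u x)"
        unfolding P'_def[symmetric] e1 e2 by (rule m3)
    qed
    show "onto_singletons V A F \<and> (\<exists>p :: 'v \<Rightarrow> ('v \<Rightarrow> 'a rel) \<Rightarrow> 'a \<Rightarrow> 'a set \<Rightarrow> real.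
        (\<forall>i\<in>V. \<forall>P\<in>profiles V A. \<forall>x\<in>A. \<forall>X. X \<subseteq> A \<longrightarrow> 0 \<le> p i P x X \<and> p i P x X \<le> 1) \<and>
        (\<forall>i\<in>V. \<forall>P\<in>profiles V A. \<forall>X. X \<subseteq> A \<and> X \<noteq> {} \<longrightarrow> (\<Sum>x\<in>X. p i P x X) = 1) \<and>
        (\<forall>i\<in>V. \<forall>P\<in>profiles V A. \<forall>X. X \<subseteq> A \<and> X \<noteq> {} \<longrightarrow>
            (\<forall>a\<in>X. (a = best (P i) X \<or> a = worst (P i) X) \<longrightarrow> p i P a X > 0)) \<and>
        (\<forall>i\<in>V. \<forall>P\<in>profiles V A. \<forall>R u. linear_order_on A R \<and> consistent_utility A (P i) u \<longrightarrow>
            (\<Sum>x\<in>F P. p i P x (F P) * u x) \<ge> (\<Sum>x\<in>F (P(i := R)). p i P x (F (P(i := R))) * u x)))"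
      apply (rule conjI)
      using H apply blast
      apply (rule exI[where x=pp])
      by (intro conjI c1 c2 c3 c4)
  next
    assume H: "onto_singletons V A F \<and> (\<exists>p :: 'v \<Rightarrow> ('v \<Rightarrow> 'a rel) \<Rightarrow> 'a \<Rightarrow> 'a set \<Rightarrow> real.
        (\<forall>i\<in>V. \<forall>P\<in>profiles V A. \<forall>x\<in>A. \<forall>X. X \<subseteq> A \<longrightarrow> 0 \<le> p i P x X \<and> p i P x X \<le> 1) \<and>
        (\<forall>i\<in>V. \<forall>P\<in>profiles V A. \<forall>X. X \<subseteq> A \<and> X \<noteq> {} \<longrightarrow> (\<Sum>x\<in>X. p i P x X) = 1) \<and>
        (\<forall>i\<in>V. \<forall>P\<in>profiles V A. \<forall>X. X \<subseteq> A \<and> X \<noteq> {} \<longrightarrow>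
            (\<forall>a\<in>X. (a = best (P i) X \<or> a = worst (P i) X) \<longrightarrow> p i P a X > 0)) \<and>
        (\<forall>i\<in>V. \<forall>P\<in>profiles V A. \<forall>R u. linear_order_on A R \<and> consistent_utility A (P i) u \<longrightarrow>
            (\<Sum>x\<in>F P. p i P x (F P) * u x) \<ge> (\<Sum>x\<in>F (P(i := R)). p i P x (F (P(i := R))) * u x)))"
    from H[THEN conjunct2] obtain p :: "'v \<Rightarrow> ('v \<Rightarrow> 'a rel) \<Rightarrow> 'a \<Rightarrow> 'a set \<Rightarrow> real" where
      hp: "(\<forall>i\<in>V. \<forall>P\<in>profiles V A. \<forall>x\<in>A. \<forall>X. X \<subseteq> A \<longrightarrow> 0 \<le> p i P x X \<and> p i P x X \<le> 1) \<and>
      (\<forall>i\<in>V. \<forall>P\<in>profiles V A. \<forall>X. X \<subseteq> A \<and> X \<noteq> {} \<longrightarrow> (\<Sum>x\<in>X. p i P x X) = 1) \<and>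
      (\<forall>i\<in>V. \<forall>P\<in>profiles V A. \<forall>X. X \<subseteq> A \<and> X \<noteq> {} \<longrightarrow>
            (\<forall>a\<in>X. (a = best (P i) X \<or> a = worst (P i) X) \<longrightarrow> p i P a X > 0)) \<and>
      (\<forall>i\<in>V. \<forall>P\<in>profiles V A. \<forall>R u. linear_order_on A R \<and> consistent_utility A (P i) u \<longrightarrow>
            (\<Sum>x\<in>F P. p i P x (F P) * u x) \<ge> (\<Sum>x\<in>F (P(i := R)). p i P x (F (P(i := R))) * u x))"
      by (rule exE)
    note h1 = hp[THEN conjunct1]
    note h2 = hp[THEN conjunct2, THEN conjunct1]
    note h3 = hp[THEN conjunct2, THEN conjunct2, THEN conjunct1]
    note h4 = hp[THEN conjunct2, THEN conjunct2, THEN conjunct2]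
    have spo: "SPO V A F"
      unfolding SPO_def
    proof (intro ballI allI impI)
      fix i P R assume i: "i\<in>V" and P: "P\<in>profiles V A" and R: "linear_order_on A R"
      define P' where "P' = P(i:=R)"
      have P': "P' \<in> profiles V A" using upd i P R unfolding P'_def by blast
      define Q where "Q = P i"
      have loi: "linear_order_on A Q" using lo i P unfolding Q_def by blast
      define b where "b = best Q (F P)"
      define b' where "b' = best Q (F P')"
      have b: "b \<in> F P" "\<forall>y\<in>F P. (b,y)\<in>Q" using best_prop[OF loi] FP[OF P] unfolding b_def by blast+
      have b': "b' \<in> F P'" "\<forall>y\<in>F P'. (b',y)\<in>Q" using best_prop[OF loi] FP[OF P'] unfolding b'_def by blast+
      show "(best (P i) (F P), best (P i) (F (P(i := R)))) \<in> P i"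
      proof (rule ccontr)
        assume "\<not> ?thesis"
        then have nb: "(b,b') \<notin> Q" unfolding b_def b'_def Q_def P'_def .
        define q where "q = p i P b' (F P')"
        have q: "q > 0" unfolding q_def using h3[rule_format, OF i P, of "F P'" b'] FP[OF P'] b'(1) unfolding b'_def Q_def by blast
        define M where "M = (real (card A) + 1) / q"
        have M: "q * M = real (card A) + 1" "M \<ge> 0" using q unfolding M_def by auto
        define u where "u x = rk A Q x + (if (x,b')\<in>Q then M else 0)" for x
        have cu: "consistent_utility A Q u"
          unfolding consistent_utility_def
        proof (intro ballI impI)
          fix x y assume xy: "x\<in>A" "y\<in>A" "strict_pref Q x y"
          have "rk A Q x > rk A Q y" using rk_strict[OF loi assms(2) xy] .
          moreover have "(y,b')\<in>Q \<Longrightarrow> (x,b')\<in>Q" using xy(3) transD[OF lin_props(3)[OF loi]]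
            unfolding strict_pref_def by blast
          ultimately show "u x > u y" unfolding u_def using M by auto
        qed
        have ineq: "(\<Sum>x\<in>F P. p i P x (F P) * u x) \<ge> (\<Sum>x\<in>F P'. p i P x (F P') * u x)"
          using h4[rule_format, OF i P, of R u] R cu unfolding Q_def P'_def by blast
        have "(\<Sum>x\<in>F P. p i P x (F P) * u x) \<le> (\<Sum>x\<in>F P. p i P x (F P) * real (card A))"
        proof (rule sum_mono)
          fix x assume x: "x \<in> F P"
          have "(x,b') \<notin> Q" using x b(2) nb transD[OF lin_props(3)[OF loi]] by blast
          then have "u x \<le> real (card A)" unfolding u_def using rk_bounds[OF assms(2)] by simp
          moreover have "p i P x (F P) \<ge> 0" using h1[rule_format, OF i P, of x "F P"] x FP[OF P] by blast
          ultimately show "p i P x (F P) * u x \<le> p i P x (F P) * real (card A)"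
            by (simp add: mult_left_mono)
        qed
        also have "\<dots> = real (card A)" using h2[rule_format, OF i P, of "F P"] FP[OF P] by (simp add: sum_distrib_right[symmetric])
        finally have L: "(\<Sum>x\<in>F P. p i P x (F P) * u x) \<le> real (card A)" .
        have "q * u b' \<le> (\<Sum>x\<in>F P'. p i P x (F P') * u x)"
          unfolding q_def
        proof (rule member_le_sum[where f = "\<lambda>x. p i P x (F P') * u x"])
          show "b' \<in> F P'" by (rule b'(1))
          show "finite (F P')" using FP[OF P'] by blast
          fix x assume "x \<in> F P' - {b'}"
          then have "x \<in> A" using FP[OF P'] by blast
          then have "p i P x (F P') \<ge> 0" using h1[rule_format, OF i P, of x "F P'"] FP[OF P'] by blast
          moreover have "u x \<ge> 0" unfolding u_def using rk_bounds[OF assms(2), of Q x] M by simp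
          ultimately show "0 \<le> p i P x (F P') * u x" by simp
        qed
        moreover have "u b' \<ge> M" unfolding u_def
          using rk_bounds[OF assms(2), of Q b'] lin_props(2)[OF loi] b'(1) FP[OF P'] by auto
        then have "q * u b' \<ge> q * M" using q by simp
        ultimately show False using L ineq M by linarith
      qed
    qed
    have spp: "SPP V A F"
      unfolding SPP_def
    proof (intro ballI allI impI)
      fix i P R assume i: "i\<in>V" and P: "P\<in>profiles V A" and R: "linear_order_on A R"
      define P' where "P' = P(i:=R)"
      have P': "P' \<in> profiles V A" using upd i P R unfolding P'_def by blast
      define Q where "Q = P i"
      have loi: "linear_order_on A Q" using lo i P unfolding Q_def by blast
      define w where "w = worst Q (F P)"
      define w' where "w' = worst Q (F P')"
      have w: "w \<in> F P" "\<forall>y\<in>F P. (y,w)\<in>Q" using worst_prop[OF loi] FP[OF P] unfolding w_def by blast+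
      have w': "w' \<in> F P'" "\<forall>y\<in>F P'. (y,w')\<in>Q" using worst_prop[OF loi] FP[OF P'] unfolding w'_def by blast+
      show "(worst (P i) (F P), worst (P i) (F (P(i := R)))) \<in> P i"
      proof (rule ccontr)
        assume "\<not> ?thesis"
        then have nw: "(w,w') \<notin> Q" unfolding w_def w'_def Q_def P'_def .
        define q where "q = p i P w (F P)"
        have q: "q > 0" unfolding q_def using h3[rule_format, OF i P, of "F P" w] FP[OF P] w(1) unfolding w_def Q_def by blast
        define M where "M = (real (card A) + 1) / q"
        have M: "q * M = real (card A) + 1" "M \<ge> 0" using q unfolding M_def by auto
        define u where "u x = rk A Q x + (if (w,x)\<in>Q then 0 else M)" for x
        have cu: "consistent_utility A Q u"
          unfolding consistent_utility_def
        proof (intro ballI impI)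
          fix x y assume xy: "x\<in>A" "y\<in>A" "strict_pref Q x y"
          have "rk A Q x > rk A Q y" using rk_strict[OF loi assms(2) xy] .
          moreover have "(w,x)\<in>Q \<Longrightarrow> (w,y)\<in>Q" using xy(3) transD[OF lin_props(3)[OF loi]]
            unfolding strict_pref_def by blast
          ultimately show "u x > u y" unfolding u_def using M by auto
        qed
        have ineq: "(\<Sum>x\<in>F P. p i P x (F P) * u x) \<ge> (\<Sum>x\<in>F P'. p i P x (F P') * u x)"
          using h4[rule_format, OF i P, of R u] R cu unfolding Q_def P'_def by blast
        have "(\<Sum>x\<in>F P'. p i P x (F P') * M) \<le> (\<Sum>x\<in>F P'. p i P x (F P') * u x)"
        proof (rule sum_mono)
          fix x assume x: "x \<in> F P'"
          have "(w,x) \<notin> Q" using x w'(2) nw transD[OF lin_props(3)[OF loi]] by blast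
          then have "u x \<ge> M" unfolding u_def using rk_bounds[OF assms(2)] by simp
          moreover have "p i P x (F P') \<ge> 0" using h1[rule_format, OF i P, of x "F P'"] x FP[OF P'] by blast
          ultimately show "p i P x (F P') * M \<le> p i P x (F P') * u x"
            by (simp add: mult_left_mono)
        qed
        moreover have "(\<Sum>x\<in>F P'. p i P x (F P') * M) = M"
          using h2[rule_format, OF i P, of "F P'"] FP[OF P'] by (simp add: sum_distrib_right[symmetric])
        ultimately have Rb: "M \<le> (\<Sum>x\<in>F P'. p i P x (F P') * u x)" by simp
        have "(\<Sum>x\<in>F P. p i P x (F P) * u x) \<le>
              (\<Sum>x\<in>F P. p i P x (F P) * (real (card A) + M) - (if x = w then p i P x (F P) * M else 0))"
        proof (rule sum_mono)
          fix x assume x: "x \<in> F P"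
          have "u x \<le> real (card A) + M - (if x = w then M else 0)"
            unfolding u_def using rk_bounds[OF assms(2), of Q x] lin_props(2)[OF loi] w(1) FP[OF P] M x by auto
          moreover have "p i P x (F P) \<ge> 0" using h1[rule_format, OF i P, of x "F P"] x FP[OF P] by blast
          ultimately have "p i P x (F P) * u x \<le> p i P x (F P) * (real (card A) + M - (if x = w then M else 0))"
            by (simp add: mult_left_mono)
          then show "p i P x (F P) * u x \<le> p i P x (F P) * (real (card A) + M) - (if x = w then p i P x (F P) * M else 0)"
            by (simp add: right_diff_distrib split: if_splits)
        qed
        also have "\<dots> = (\<Sum>x\<in>F P. p i P x (F P)) * (real (card A) + M) - q * M"
          using FP[OF P] w(1) unfolding q_def by (simp add: sum_subtractf sum_distrib_right sum.delta')
        also have "\<dots> = real (card A) + M - q * M" using h2[rule_format, OF i P, of "F P"] FP[OF P] by simp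
        finally show False using Rb ineq M by linarith
      qed
    qed
    show "onto_singletons V A F \<and> SPO V A F \<and> SPP V A F" using H spo spp by blast
  qed
qed

end
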